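(* Let $F$ be a smooth regular distribution supported on $[0,1]$. Then $\tilde{O}(\epsilon^{-1/2})$ oracle queries to $F$ and $f$ suffice to learn $F$ within Lévy distance $O(\epsilon)$.
   Context: A distribution is smooth if it has no point masses and its PDF $f$ is $C^1$; it is regular iff $f'(v)(1-F(v))\ge-2f(v)^2$ for all $v$ (equivalently $qF^{-1}(1-q)$ concave). Oracle query model: an algorithm adaptively chooses points $x$ and receives the exact values $F(x)$ and/or $f(x)$; afterwards it outputs a distribution $\hat F$, which must satisfy the accuracy guarantee in Lévy distance $\mathrm{L\acute{e}vy}(F,G)=\inf\{\epsilon: F(v-\epsilon)-\epsilon\le G(v)\le F(v+\epsilon)+\epsilon\ \forall v\}$. $\tilde{O}$ hides polylog$(1/\epsilon)$ factors. *)

theory Defs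
  imports "HOL-Analysis.Analysis"
begin

definition smooth_regular_01 :: "(real \<Rightarrow> real) \<Rightarrow> (real \<Rightarrow> real) \<Rightarrow> bool" where
  "smooth_regular_01 F f \<longleftrightarrow>
     (\<forall>x\<le>0. F x = 0) \<and> (\<forall>x\<ge>1. F x = 1) \<and>
     (\<forall>x. 0 \<le> f x) \<and> (\<forall>x. x \<notin> {0..1} \<longrightarrow> f x = 0) \<and>
     (\<forall>x\<in>{0..1}. (F has_real_derivative f x) (at x within {0..1})) \<and>
     (\<exists>f'. continuous_on {0..1} f' \<and>
        (\<forall>x\<in>{0..1}. (f has_real_derivative f' x) (at x within {0..1})) \<and>
        (\<forall>v\<in>{0..1}. f' v * (1 - F v) \<ge> - 2 * (f v)^2))"

definition is_cdf :: "(real \<Rightarrow> real) \<Rightarrow> bool" where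
  "is_cdf G \<longleftrightarrow> mono G \<and> (\<forall>x. continuous (at_right x) G) \<and>
     (G \<longlongrightarrow> 0) at_bot \<and> (G \<longlongrightarrow> 1) at_top"

definition levy :: "(real \<Rightarrow> real) \<Rightarrow> (real \<Rightarrow> real) \<Rightarrow> real" where
  "levy F G = Inf {e. 0 \<le> e \<and> (\<forall>v. F (v - e) - e \<le> G v \<and> G v \<le> F (v + e) + e)}"

text \<open>Adaptive deterministic oracle algorithms: given the history of queries
  (point x, answer (F x, f x)), either query a new point or output a distribution.\<close>
datatype action = Query real | Output "real \<Rightarrow> real"

type_synonym history = "(real \<times> (real \<times> real)) list"

fun run :: "(history \<Rightarrow> action) \<Rightarrow> (real \<Rightarrow> real \<times> real) \<Rightarrow> nat \<Rightarrow> history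
             \<Rightarrow> (real \<Rightarrow> real) option" where
  "run A orc 0 h = (case A h of Output G \<Rightarrow> Some G | Query x \<Rightarrow> None)"
| "run A orc (Suc n) h = (case A h of Output G \<Rightarrow> Some G
                        | Query x \<Rightarrow> run A orc n (h @ [(x, orc x)]))"

end

theory Submission
  imports Defs
begin



lemma mono_within:
  fixes h h' :: "real \<Rightarrow> real"
  assumes ab: "a \<le> b"
    and d: "\<And>x. x \<in> {a..b} \<Longrightarrow> (h has_real_derivative h' x) (at x within {a..b})"
    and nn: "\<And>x. x \<in> {a..b} \<Longrightarrow> h' x \<ge> 0"
  shows "h a \<le> h b"
proof (rule DERIV_nonneg_imp_increasing_open[OF ab])
  fix x assume x: "a < x" "x < b"
  have "(h has_real_derivative h' x) (at x)"
    using d[of x] x at_within_Icc_at[of a x b] by auto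
  then show "\<exists>y. DERIV h x :> y \<and> y \<ge> 0" using nn[of x] x by auto
next
  show "continuous_on {a..b} h"
    unfolding continuous_on_eq_continuous_within
    using d DERIV_continuous by blast
qed

lemma tangent_below:
  fixes g g' :: "real \<Rightarrow> real"
  assumes d: "\<And>x. x \<in> {p..q} \<Longrightarrow> (g has_real_derivative g' x) (at x within {p..q})"
    and mono: "\<And>x y. x \<in> {p..q} \<Longrightarrow> y \<in> {p..q} \<Longrightarrow> x \<le> y \<Longrightarrow> g' x \<le> g' y"
    and a: "a \<in> {p..q}" and x: "x \<in> {p..q}"
  shows "g x \<ge> g a + g' a * (x - a)"
proof (cases "a \<le> x")
  case True
  have "(\<lambda>y. g y - g' a * y) a \<le> (\<lambda>y. g y - g' a * y) x"
  proof (rule mono_within[OF True])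
    fix y assume y: "y \<in> {a..x}"
    have sub: "{a..x} \<subseteq> {p..q}" using a x by auto
    have "(g has_real_derivative g' y) (at y within {a..x})"
      using has_field_derivative_subset[OF d sub] y sub by auto
    then show "((\<lambda>y. g y - g' a * y) has_real_derivative g' y - g' a) (at y within {a..x})"
      by (auto intro!: derivative_eq_intros)
    show "0 \<le> g' y - g' a" using mono[of a y] y a sub by auto
  qed
  then show ?thesis by (simp add: algebra_simps)
next
  case False
  then have xa: "x \<le> a" by simp
  have "(\<lambda>y. g' a * y - g y) x \<le> (\<lambda>y. g' a * y - g y) a"
  proof (rule mono_within[OF xa])
    fix y assume y: "y \<in> {x..a}"
    have sub: "{x..a} \<subseteq> {p..q}" using a x by auto
    have "(g has_real_derivative g' y) (at y within {x..a})"
      using has_field_derivative_subset[OF d sub] y sub by auto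
    then show "((\<lambda>y. g' a * y - g y) has_real_derivative g' a - g' y) (at y within {x..a})"
      by (auto intro!: derivative_eq_intros)
    show "0 \<le> g' a - g' y" using mono[of y a] y a sub by auto
  qed
  then show ?thesis by (simp add: algebra_simps)
qed




lemma srF_deriv:
  assumes "smooth_regular_01 F f" "x \<in> {0..1}" "{a..b} \<subseteq> {0..1}" "x \<in> {a..b}"
  shows "(F has_real_derivative f x) (at x within {a..b})"
  using assms unfolding smooth_regular_01_def
  by (meson has_field_derivative_subset)

lemma srF_mono01:
  assumes sr: "smooth_regular_01 F f" and "0 \<le> a" "a \<le> b" "b \<le> 1"
  shows "F a \<le> F b"
proof (rule mono_within[where h'=f, OF \<open>a \<le> b\<close>])
  fix x assume "x \<in> {a..b}"
  then show "(F has_real_derivative f x) (at x within {a..b})"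
    using srF_deriv[OF sr, of x a b] assms by auto
  show "0 \<le> f x" using sr unfolding smooth_regular_01_def by auto
qed

lemma srF_props:
  assumes sr: "smooth_regular_01 F f"
  shows "mono F" "\<And>x. 0 \<le> F x" "\<And>x. F x \<le> 1" "F 0 = 0" "F 1 = 1"
proof -
  have z: "\<And>x. x \<le> 0 \<Longrightarrow> F x = 0" and o: "\<And>x. x \<ge> 1 \<Longrightarrow> F x = 1"
    using sr unfolding smooth_regular_01_def by auto
  show F0: "F 0 = 0" "F 1 = 1" using z o by auto
  have bnd: "0 \<le> F x \<and> F x \<le> 1" for x
  proof (cases "x \<le> 0 \<or> x \<ge> 1")
    case True then show ?thesis using z o by auto
  next
    case False
    then show ?thesis using srF_mono01[OF sr, of 0 x] srF_mono01[OF sr, of x 1] F0 by auto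
  qed
  then show "\<And>x. 0 \<le> F x" "\<And>x. F x \<le> 1" by auto
  show "mono F"
  proof (rule monoI)
    fix x y :: real assume xy: "x \<le> y"
    show "F x \<le> F y"
    proof (cases "x \<le> 0")
      case True then show ?thesis using z bnd by auto
    next
      case False
      show ?thesis
      proof (cases "y \<ge> 1")
        case True then show ?thesis using o bnd by auto
      next
        case False
        then show ?thesis using \<open>\<not> x \<le> 0\<close> xy srF_mono01[OF sr, of x y] by auto
      qed
    qed
  qed
qed

lemma aux_frac:
  fixes u a b :: real assumes "u \<noteq> 0"
  shows "(a * u\<^sup>2 - b * (real 2 * ((0 - b) * u ^ (2 - Suc 0)))) / (u\<^sup>2 * u\<^sup>2) = (a * u + 2 * b^2) / u^3"
  using assms by (simp add: field_simps power2_eq_square power3_eq_cube)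

lemma slope_mono:
  assumes sr: "smooth_regular_01 F f" and vw: "0 \<le> v" "v \<le> w" "w \<le> 1" and Fw: "F w < 1"
  shows "f v / (1 - F v)^2 \<le> f w / (1 - F w)^2"
proof -
  obtain f' where fc: "\<forall>x\<in>{0..1}. (f has_real_derivative f' x) (at x within {0..1})"
     and reg: "\<forall>x\<in>{0..1}. f' x * (1 - F x) \<ge> - 2 * (f x)^2"
    using sr unfolding smooth_regular_01_def by blast
  have mF: "mono F" using srF_props[OF sr] by auto
  define k where "k = (\<lambda>x. f x / (1 - F x)^2)"
  have "k v \<le> k w"
  proof (rule mono_within[where h=k and
       h'="\<lambda>x. (f' x * (1 - F x) + 2 * (f x)^2) / (1 - F x)^3", OF vw(2)])
    fix x assume x: "x \<in> {v..w}"
    have sub: "{v..w} \<subseteq> {0..1}" using vw by auto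
    have x01: "x \<in> {0..1}" using x sub by auto
    have Fx: "F x < 1" using mF x Fw by (meson atLeastAtMost_iff le_less_trans monoD)
    have dF: "(F has_real_derivative f x) (at x within {v..w})"
      using srF_deriv[OF sr x01 sub x] .
    have df: "(f has_real_derivative f' x) (at x within {v..w})"
      using has_field_derivative_subset[of f "f' x" x "{0..1}" "{v..w}"] fc x01 sub by auto
    have ne: "1 - F x \<noteq> 0" using Fx by simp
    have Fne: "F x \<noteq> 1" using Fx by simp
    show "(k has_real_derivative (f' x * (1 - F x) + 2 * (f x)^2) / (1 - F x)^3) (at x within {v..w})"
      unfolding k_def
      apply (rule derivative_eq_intros dF df refl)+
      using ne Fne aux_frac[OF ne] by auto
    show "0 \<le> (f' x * (1 - F x) + 2 * (f x)^2) / (1 - F x)^3"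
    proof (intro divide_nonneg_pos)
      have "- 2 * (f x)^2 \<le> f' x * (1 - F x)" using reg x01 by blast
      then show "0 \<le> f' x * (1 - F x) + 2 * (f x)^2" by linarith
    qed (use Fx in auto)
  qed
  then show ?thesis unfolding k_def .
qed

lemma g_deriv:
  assumes sr: "smooth_regular_01 F f" and x: "x \<in> {a..b}" and sub: "{a..b} \<subseteq> {0..1}" and Fx: "F x < 1"
  shows "((\<lambda>x. 1 / (1 - F x)) has_real_derivative f x / (1 - F x)^2) (at x within {a..b})"
proof -
  have dF: "(F has_real_derivative f x) (at x within {a..b})"
    using srF_deriv[OF sr _ sub x] x sub by auto
  have ne: "1 - F x \<noteq> 0" using Fx by simp
  have "((\<lambda>x. 1 / (1 - F x)) has_real_derivative (0 * (1 - F x) - 1 * (0 - f x)) / (1 - F x)^2) (at x within {a..b})"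
    by (rule derivative_eq_intros dF refl | use Fx in \<open>simp add: ne power2_eq_square\<close>)+
  then show ?thesis by simp
qed




lemma chord_above:
  fixes g s :: "real \<Rightarrow> real"
  assumes pq: "p < q" and v: "p \<le> v" "v \<le> q"
    and t1: "g p \<ge> g v + s v * (p - v)" and t2: "g q \<ge> g v + s v * (q - v)"
  shows "g v \<le> ((q - v) * g p + (v - p) * g q) / (q - p)"
proof -
  have "(q - v) * g p \<ge> (q - v) * (g v + s v * (p - v))"
    using t1 v by (intro mult_left_mono) auto
  moreover have "(v - p) * g q \<ge> (v - p) * (g v + s v * (q - v))"
    using t2 v by (intro mult_left_mono) auto
  ultimately have "(q - v) * g p + (v - p) * g q \<ge> (q - p) * g v"
    by (simp add: algebra_simps)
  then show ?thesis using pq by (simp add: field_simps)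
qed

lemma chord_flat:
  fixes g s :: "real \<Rightarrow> real"
  assumes pq: "p < q" and v: "p \<le> v" "v \<le> q"
    and t1: "g v \<ge> g p + s p * (v - p)" and t2: "g p \<ge> g q + s q * (p - q)"
    and sm: "s p \<le> s q"
  shows "((q - v) * g p + (v - p) * g q) / (q - p) - g v \<le> (q - p) * (s q - s p)"
proof -
  have A: "((q - v) * g p + (v - p) * g q) / (q - p) = g p + (v - p) * ((g q - g p) / (q - p))"
    using pq by (simp add: field_simps)
  have B: "(g q - g p) / (q - p) \<le> s q" using t2 pq by (simp add: field_simps)
  have "(v - p) * ((g q - g p) / (q - p)) \<le> (v - p) * s q"
    using B v by (intro mult_left_mono) auto
  then have "((q - v) * g p + (v - p) * g q) / (q - p) - g v \<le> (v - p) * (s q - s p)"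
    using A t1 by (simp add: algebra_simps)
  also have "\<dots> \<le> (q - p) * (s q - s p)"
    using v sm by (intro mult_right_mono) auto
  finally show ?thesis .
qed

lemma chord_steep:
  fixes g s :: "real \<Rightarrow> real"
  assumes pq: "p < q" and v: "p \<le> v" "v \<le> q" and e: "0 \<le> e" and x: "v + e \<le> q"
    and t1: "g (v + e) \<ge> g p + s p * (v + e - p)"
    and t2: "g (v + e) \<ge> g q + s q * (v + e - q)"
    and t3: "g q \<ge> g p + s p * (q - p)"
    and t4: "g p \<ge> g q + s q * (p - q)"
    and sp: "s p > 0"
    and cond: "(g q - g p) * (1 / s p - 1 / s q) \<le> e"
  shows "((q - v) * g p + (v - p) * g q) / (q - p) \<le> g (v + e)"
proof (rule ccontr)
  define w where "w = q - p"
  define t where "t = v - p"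
  define m where "m = (g q - g p) / w"
  have w: "w > 0" using pq w_def by simp
  have gq: "g q = g p + m * w" using w unfolding m_def by simp
  have L: "((q - v) * g p + (v - p) * g q) / (q - p) = g p + m * t"
    using w unfolding m_def t_def w_def by (simp add: field_simps)
  assume "\<not> ((q - v) * g p + (v - p) * g q) / (q - p) \<le> g (v + e)"
  then have bad: "g (v + e) < g p + m * t" using L by simp
  have spm: "s p \<le> m" using t3 w unfolding m_def w_def by (simp add: field_simps)
  have msq: "m \<le> s q" using t4 w unfolding m_def w_def by (simp add: field_simps)
  have sq: "s q > 0" using sp spm msq by linarith
  have t0: "0 \<le> t" "t \<le> w" using v unfolding t_def w_def by auto
  have b1: "s p * (t + e) < m * t" using bad t1 unfolding t_def by (simp add: algebra_simps)
  have b2: "m * w + s q * (t + e - w) < m * t" using bad t2 gq unfolding t_def w_def by (simp add: algebra_simps)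
  have c1: "e < t * (m / s p - 1)"
  proof -
    have "s p * e < t * (m - s p)" using b1 by (simp add: algebra_simps)
    then have "e < t * (m - s p) / s p" using sp by (simp add: field_simps)
    then show ?thesis using sp by (simp add: field_simps)
  qed
  have c2: "e < (w - t) * (1 - m / s q)"
  proof -
    have "s q * e < (w - t) * (s q - m)" using b2 by (simp add: algebra_simps)
    then have "e < (w - t) * (s q - m) / s q" using sq by (simp add: field_simps)
    then show ?thesis using sq by (simp add: field_simps)
  qed
  have n1: "0 \<le> m / s p - 1" using spm sp by (simp add: field_simps)
  have n2: "0 \<le> 1 - m / s q" using msq sq by (simp add: field_simps)
  have "t * (m / s p - 1) \<le> w * (m / s p - 1)" using t0 n1 by (intro mult_right_mono) auto
  moreover have "(w - t) * (1 - m / s q) \<le> w * (1 - m / s q)" using t0 n2 by (intro mult_right_mono) auto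
  moreover have "w * (m / s p - 1) + w * (1 - m / s q) = (g q - g p) * (1 / s p - 1 / s q)"
    using w sp sq unfolding m_def by (simp add: field_simps)
  ultimately show False using c1 c2 cond e by linarith
qed




definition phi :: "real \<Rightarrow> real \<Rightarrow> real \<Rightarrow> real \<Rightarrow> real \<Rightarrow> real" where
  "phi a b p q v = (let t = (v - p) / (q - p) in
     if b < 1 then 1 - 1 / ((1 - t) / (1 - a) + t / (1 - b)) else a + t * (b - a))"

lemma phi_eq:
  assumes "p < q" "b < 1" "a < 1"
  shows "phi a b p q v = 1 - 1 / (((q - v) * (1 / (1 - a)) + (v - p) * (1 / (1 - b))) / (q - p))"
proof -
  have "(1 - (v - p) / (q - p)) / (1 - a) + (v - p) / (q - p) / (1 - b)
      = ((q - v) * (1 / (1 - a)) + (v - p) * (1 / (1 - b))) / (q - p)"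
  proof -
    have "1 - (v - p) / (q - p) = (q - v) / (q - p)" using assms by (simp add: field_simps)
    then have "(1 - (v - p) / (q - p)) / (1 - a) = (q - v) * (1 / (1 - a)) / (q - p)" by simp
    moreover have "(v - p) / (q - p) / (1 - b) = (v - p) * (1 / (1 - b)) / (q - p)" by simp
    ultimately show ?thesis by (simp add: add_divide_distrib)
  qed
  then show ?thesis using assms unfolding phi_def Let_def by simp
qed

lemma piece_main:
  assumes sr: "smooth_regular_01 F f" and pq: "0 \<le> p" "p < q" "q \<le> 1" and Fq: "F q < 1"
    and v: "p \<le> v" "v \<le> q"
  defines "g \<equiv> \<lambda>x. 1 / (1 - F x)" and "s \<equiv> \<lambda>x. f x / (1 - F x)^2"
  shows "F v \<le> phi (F p) (F q) p q v"
    and "\<lbrakk>0 < B; B \<le> g p; (q - p) * (s q - s p) \<le> D\<rbrakk> \<Longrightarrow> phi (F p) (F q) p q v \<le> F v + D / B^2"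
    and "\<lbrakk>0 < s p; 0 \<le> e; (g q - g p) * (1 / s p - 1 / s q) \<le> e\<rbrakk> \<Longrightarrow> phi (F p) (F q) p q v \<le> F (v + e)"
proof -
  have mF: "mono F" and F01: "\<And>x. 0 \<le> F x" "\<And>x. F x \<le> 1" using srF_props[OF sr] by auto
  have sub: "{p..q} \<subseteq> {0..1}" using pq by auto
  have Flt: "F x < 1" if "x \<le> q" for x using mF that Fq by (meson le_less_trans monoD)
  have gpos: "g x \<ge> 1" if "x \<le> q" for x
    using Flt[OF that] F01[of x] unfolding g_def by (simp add: field_simps)
  have gmono: "g x \<le> g y" if "x \<le> y" "y \<le> q" for x y
  proof -
    have "F x \<le> F y" using mF that by (simp add: monoD)
    moreover have "F y < 1" using Flt that by simp
    ultimately show ?thesis unfolding g_def by (simp add: frac_le)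
  qed
  have d: "\<And>x. x \<in> {p..q} \<Longrightarrow> (g has_real_derivative s x) (at x within {p..q})"
    unfolding g_def s_def using g_deriv[OF sr _ sub] Flt by auto
  have sm: "\<And>x y. x \<in> {p..q} \<Longrightarrow> y \<in> {p..q} \<Longrightarrow> x \<le> y \<Longrightarrow> s x \<le> s y"
    unfolding s_def by (rule slope_mono[OF sr]) (use pq Flt in auto)
  note T = tangent_below[where g=g and g'=s, OF d sm]
  have Fp: "F p < 1" using Flt pq by simp
  have Fg: "F x = 1 - 1 / g x" if "x \<le> q" for x
    using Flt[OF that] unfolding g_def by (simp add: field_simps)
  define Lc where "Lc = ((q - v) * g p + (v - p) * g q) / (q - p)"
  have phiL: "phi (F p) (F q) p q v = 1 - 1 / Lc"
    using phi_eq[OF pq(2) Fq Fp] unfolding Lc_def g_def by simp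
  have above: "g v \<le> Lc" unfolding Lc_def
    by (rule chord_above[where s=s, OF pq(2) v]) (use T v pq in auto)
  have gv1: "g v \<ge> 1" using gpos v by simp
  show "F v \<le> phi (F p) (F q) p q v"
    unfolding phiL Fg[OF v(2)] using above gv1 by (simp add: frac_le)
  show "phi (F p) (F q) p q v \<le> F v + D / B^2" if B: "0 < B" "B \<le> g p" "(q - p) * (s q - s p) \<le> D"
  proof -
    have fl: "Lc - g v \<le> (q - p) * (s q - s p)" unfolding Lc_def
      by (rule chord_flat[where s=s, OF pq(2) v]) (use T v pq sm in auto)
    have gvB: "B \<le> g v" using B gmono v by force
    have LB: "B \<le> Lc" using gvB above by linarith
    have "1 / g v - 1 / Lc = (Lc - g v) / (g v * Lc)" using gv1 above by (simp add: field_simps)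
    also have "\<dots> \<le> D / (B * B)"
    proof (rule frac_le)
      show "0 \<le> D" using fl B above by linarith
      show "Lc - g v \<le> D" using fl B by linarith
      show "0 < B * B" using B by simp
      show "B * B \<le> g v * Lc" using gvB LB B by (intro mult_mono) auto
    qed
    finally show ?thesis unfolding phiL Fg[OF v(2)] by (simp add: power2_eq_square)
  qed
  show "phi (F p) (F q) p q v \<le> F (v + e)" if S: "0 < s p" "0 \<le> e" "(g q - g p) * (1 / s p - 1 / s q) \<le> e"
  proof (cases "v + e \<le> q")
    case True
    have "Lc \<le> g (v + e)" unfolding Lc_def
      by (rule chord_steep[where s=s, OF pq(2) v S(2) True _ _ _ _ S(1) S(3)]) (use T v pq S True in auto)
    then show ?thesis unfolding phiL Fg[OF True] using above gv1 by (simp add: frac_le)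
  next
    case False
    have "Lc \<le> g q"
    proof -
      have "g p \<le> g q" using gmono pq by simp
      then have "(q - v) * g p + (v - p) * g q \<le> (q - v) * g q + (v - p) * g q"
        using v by (intro add_right_mono mult_left_mono) auto
      then show ?thesis unfolding Lc_def using pq by (simp add: field_simps)
    qed
    then have "1 - 1 / Lc \<le> 1 - 1 / g q" using above gv1 by (simp add: frac_le)
    then have "phi (F p) (F q) p q v \<le> F q" using phiL Fg[OF order_refl] by simp
    also have "F q \<le> F (v + e)" using False mF by (simp add: monoD)
    finally show ?thesis .
  qed
qed




definition pl :: "real set \<Rightarrow> real \<Rightarrow> real" where "pl X v = Max {x\<in>X. x \<le> v}"
definition pr :: "real set \<Rightarrow> real \<Rightarrow> real" where "pr X v = Min {x\<in>X. v < x}"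

definition interp :: "real set \<Rightarrow> (real \<Rightarrow> real) \<Rightarrow> real \<Rightarrow> real" where
  "interp X V v = (if v < 0 then 0 else if 1 \<le> v then 1 else
      phi (V (pl X v)) (V (pr X v)) (pl X v) (pr X v) v)"

lemma phi_mono_bounds:
  assumes ab: "0 \<le> a" "a \<le> b" "b \<le> 1" and pq: "p < q" and v: "p \<le> v" "v \<le> w" "w \<le> q"
  shows "phi a b p q v \<le> phi a b p q w" "a \<le> phi a b p q v" "phi a b p q v \<le> b"
proof -
  define t where "t = (\<lambda>v. (v - p) / (q - p))"
  have t01a: "0 \<le> t v" using v pq unfolding t_def by simp
  have t01b: "t v \<le> t w" using v pq unfolding t_def by (intro divide_right_mono) auto
  have t01c: "t w \<le> 1" using v pq unfolding t_def by (simp add: field_simps)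
  note t01 = t01a t01b t01c
  have phit: "phi a b p q x = (if b < 1 then 1 - 1 / ((1 - t x) / (1 - a) + t x / (1 - b)) else a + t x * (b - a))" for x
    unfolding phi_def t_def Let_def by simp
  show "phi a b p q v \<le> phi a b p q w" "a \<le> phi a b p q v" "phi a b p q v \<le> b"
  proof (atomize (full), cases "b < 1")
    case True
    define A where "A = 1 / (1 - a)"
    define B where "B = 1 / (1 - b)"
    have a1: "a < 1" using True ab by simp
    have AB: "1 \<le> A" "A \<le> B" using ab True a1 unfolding A_def B_def by (auto simp: field_simps)
    have Lx: "(1 - t x) / (1 - a) + t x / (1 - b) = A + t x * (B - A)" for x
    proof -
      have "(1 - t x) / (1 - a) = (1 - t x) * A" "t x / (1 - b) = t x * B" unfolding A_def B_def by simp_all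
      moreover have "(1 - t x) * A + t x * B = A + t x * (B - A)" by (simp add: algebra_simps)
      ultimately show ?thesis by simp
    qed
    have Lmono: "A + t v * (B - A) \<le> A + t w * (B - A)" using t01 AB by (intro add_left_mono mult_right_mono) auto
    have Lv1: "A \<le> A + t v * (B - A)" using t01 AB by simp
    have LvB: "A + t v * (B - A) \<le> B"
    proof -
      have tv1: "t v \<le> 1" using t01 by linarith
    have "t v * (B - A) \<le> 1 * (B - A)" using tv1 AB by (intro mult_right_mono) auto
      then show ?thesis by simp
    qed
    have bB: "b = 1 - 1 / B" and aA: "a = 1 - 1 / A" using True a1 unfolding A_def B_def by auto
    have "1 - 1 / (A + t v * (B - A)) \<le> 1 - 1 / (A + t w * (B - A))"
      using Lmono Lv1 AB by (simp add: frac_le)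
    moreover have "1 - 1 / A \<le> 1 - 1 / (A + t v * (B - A))" using Lv1 AB by (simp add: frac_le)
    moreover have "1 - 1 / (A + t v * (B - A)) \<le> 1 - 1 / B" using LvB Lv1 AB by (simp add: frac_le)
    moreover have "phi a b p q v = 1 - 1 / (A + t v * (B - A))" using True phit[of v] Lx[of v] by simp
    moreover have "phi a b p q w = 1 - 1 / (A + t w * (B - A))" using True phit[of w] Lx[of w] by simp
    ultimately show "phi a b p q v \<le> phi a b p q w \<and> a \<le> phi a b p q v \<and> phi a b p q v \<le> b"
      using aA bB by linarith
  next
    case False
    have "t v * (b - a) \<le> t w * (b - a)" using t01 ab by (intro mult_right_mono) auto
    moreover have "t v * (b - a) \<le> 1 * (b - a)" using t01 ab by (intro mult_right_mono) linarith+
    moreover have "0 \<le> t v * (b - a)" using t01 ab by simp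
    ultimately show "phi a b p q v \<le> phi a b p q w \<and> a \<le> phi a b p q v \<and> phi a b p q v \<le> b"
      using False unfolding phit by simp
  qed
qed


lemma phi_cont:
  assumes ab: "0 \<le> a" "a \<le> b" "b \<le> 1" and pq: "p < q" and v: "p \<le> v" "v \<le> q"
  shows "isCont (phi a b p q) v"
proof (cases "b < 1")
  case True
  have a1: "a < 1" using True ab by simp
  have t01: "0 \<le> (v - p) / (q - p)" "(v - p) / (q - p) \<le> 1" using v pq by (auto simp: field_simps)
  have pos: "(1 - (v - p) / (q - p)) / (1 - a) + (v - p) / (q - p) / (1 - b) > 0"
  proof -
    have "0 \<le> (1 - (v - p) / (q - p)) / (1 - a)" using t01 a1 by simp
    moreover have "0 \<le> (v - p) / (q - p) / (1 - b)" using t01 True v pq by (intro divide_nonneg_nonneg) auto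
    moreover have "0 < (1 - (v - p) / (q - p)) / (1 - a) \<or> 0 < (v - p) / (q - p) / (1 - b)"
    proof (cases "v = p")
      case True then show ?thesis using a1 by simp
    next
      case False
      then have "0 < (v - p) / (q - p) / (1 - b)" using v pq \<open>b < 1\<close> by (intro divide_pos_pos) auto
      then show ?thesis by simp
    qed
    ultimately show ?thesis by linarith
  qed
  have eq: "phi a b p q = (\<lambda>x. 1 - 1 / ((1 - (x - p) / (q - p)) / (1 - a) + (x - p) / (q - p) / (1 - b)))"
    using True unfolding phi_def Let_def by auto
  show ?thesis unfolding eq using pos pq a1 True by (intro continuous_intros) auto
next
  case False
  have eq: "phi a b p q = (\<lambda>x. a + (x - p) / (q - p) * (b - a))"
    using False unfolding phi_def Let_def by auto
  show ?thesis unfolding eq using pq by (intro continuous_intros) auto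
qed

locale interp_setup =
  fixes X :: "real set" and V F :: "real \<Rightarrow> real"
  assumes fin: "finite X" and X0: "0 \<in> X" and X1: "1 \<in> X" and Xsub: "X \<subseteq> {0..1}"
    and VF: "\<And>x. x \<in> X \<Longrightarrow> V x = F x"
    and mF: "mono F" and F0: "\<And>x. 0 \<le> F x" and F1: "\<And>x. F x \<le> 1" and Fz: "F 0 = 0" and Fo: "F 1 = 1"
begin

lemma pl_props:
  assumes "0 \<le> v"
  shows "pl X v \<in> X" "pl X v \<le> v" "\<And>x. x \<in> X \<Longrightarrow> x \<le> v \<Longrightarrow> x \<le> pl X v"
proof -
  have ne: "{x\<in>X. x \<le> v} \<noteq> {}" using X0 assms by auto
  have f: "finite {x\<in>X. x \<le> v}" using fin by simp
  show "pl X v \<in> X" "pl X v \<le> v" using Max_in[OF f ne] unfolding pl_def by auto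
  show "\<And>x. x \<in> X \<Longrightarrow> x \<le> v \<Longrightarrow> x \<le> pl X v" unfolding pl_def using f by (simp add: Max_ge)
qed

lemma pr_props:
  assumes "v < 1"
  shows "pr X v \<in> X" "v < pr X v" "\<And>x. x \<in> X \<Longrightarrow> v < x \<Longrightarrow> pr X v \<le> x"
proof -
  have ne: "{x\<in>X. v < x} \<noteq> {}" using X1 assms by auto
  have f: "finite {x\<in>X. v < x}" using fin by simp
  show "pr X v \<in> X" "v < pr X v" using Min_in[OF f ne] unfolding pr_def by auto
  show "\<And>x. x \<in> X \<Longrightarrow> v < x \<Longrightarrow> pr X v \<le> x" unfolding pr_def using f by (simp add: Min_le)
qed

lemma same_piece:
  assumes v: "0 \<le> v" "v \<le> w" "w < pr X v" "w < 1"
  shows "pl X w = pl X v" "pr X w = pr X v"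
proof -
  have v1: "v < 1" using v by simp
  note P = pl_props[OF v(1)] pr_props[OF v1]
  have w0: "0 \<le> w" using v by simp
  note Q = pl_props[OF w0] pr_props[OF v(4)]
  have "pl X w \<le> v"
  proof (rule ccontr)
    assume "\<not> pl X w \<le> v"
    then have "pr X v \<le> pl X w" using P Q by auto
    then show False using Q v by auto
  qed
  then show "pl X w = pl X v" using P(3)[OF Q(1)] Q(3)[OF P(1)] P(2) v(2) by (meson order.antisym order.trans)
  show "pr X w = pr X v" using P Q v by (meson order.antisym le_less_trans order_less_imp_le)
qed

lemma G_bounds:
  assumes "0 \<le> v" "v < 1"
  shows "F (pl X v) \<le> interp X V v" "interp X V v \<le> F (pr X v)"
proof -
  note P = pl_props[OF assms(1)] pr_props[OF assms(2)]
  have ab: "F (pl X v) \<le> F (pr X v)" using P mF by (meson less_imp_le monoD order.trans)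
  have "phi (F (pl X v)) (F (pr X v)) (pl X v) (pr X v) v \<le> phi (F (pl X v)) (F (pr X v)) (pl X v) (pr X v) v
     \<and> F (pl X v) \<le> phi (F (pl X v)) (F (pr X v)) (pl X v) (pr X v) v
     \<and> phi (F (pl X v)) (F (pr X v)) (pl X v) (pr X v) v \<le> F (pr X v)"
    using phi_mono_bounds[OF F0 ab F1, of "pl X v" "pr X v" v v] P by auto
  then show "F (pl X v) \<le> interp X V v" "interp X V v \<le> F (pr X v)"
    using assms P VF unfolding interp_def by auto
qed

lemma G_range: "0 \<le> interp X V v" "interp X V v \<le> 1"
proof -
  have "0 \<le> interp X V v \<and> interp X V v \<le> 1"
  proof (cases "0 \<le> v \<and> v < 1")
    case True
    then show ?thesis using G_bounds[of v] F0[of "pl X v"] F1[of "pr X v"] by auto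
  next
    case False then show ?thesis unfolding interp_def by auto
  qed
  then show "0 \<le> interp X V v" "interp X V v \<le> 1" by auto
qed

lemma G_mono: "mono (interp X V)"
proof (rule monoI)
  fix v w :: real assume vw: "v \<le> w"
  show "interp X V v \<le> interp X V w"
  proof (cases "v < 0")
    case True then show ?thesis using G_range[of w] unfolding interp_def by simp
  next
    case v0: False
    show ?thesis
    proof (cases "1 \<le> w")
      case True then show ?thesis using G_range[of v] unfolding interp_def by simp
    next
      case w1: False
      have v0': "0 \<le> v" "v < 1" "0 \<le> w" "w < 1" using v0 w1 vw by auto
      note P = pl_props[OF v0'(1)] pr_props[OF v0'(2)]
      show ?thesis
      proof (cases "w < pr X v")
        case True
        note S = same_piece[OF v0'(1) vw True v0'(4)]
        have ab: "F (pl X v) \<le> F (pr X v)" using P mF by (meson less_imp_le monoD order.trans)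
        have "phi (F (pl X v)) (F (pr X v)) (pl X v) (pr X v) v \<le> phi (F (pl X v)) (F (pr X v)) (pl X v) (pr X v) w"
          using phi_mono_bounds(1)[OF F0 ab F1, of "pl X v" "pr X v" v w] P vw True by auto
        then show ?thesis using v0' S P VF unfolding interp_def by auto
      next
        case False
        then have "pr X v \<le> pl X w" using pl_props(3)[OF v0'(3)] P by auto
        then have "F (pr X v) \<le> F (pl X w)" using mF by (simp add: monoD)
        then show ?thesis using G_bounds[of v] G_bounds[of w] v0' by linarith
      qed
    qed
  qed
qed

lemma G_rcont: "continuous (at_right v) (interp X V)"
proof (cases "v < 0")
  case True
  have "\<forall>\<^sub>F x in at_right v. interp X V x = 0"
    using True unfolding eventually_at_right_field
    by (intro exI[of _ 0]) (auto simp: interp_def)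
  moreover have "interp X V v = 0" using True unfolding interp_def by simp
  ultimately show ?thesis unfolding continuous_within
    by (metis (mono_tags, lifting) eventually_mono tendsto_const tendsto_eventually)
next
  case v0: False
  show ?thesis
  proof (cases "1 \<le> v")
    case True
    have "\<forall>\<^sub>F x in at_right v. interp X V x = 1"
      using True unfolding eventually_at_right_field
      by (intro exI[of _ "v+1"]) (auto simp: interp_def)
    moreover have "interp X V v = 1" using True unfolding interp_def by simp
    ultimately show ?thesis unfolding continuous_within
      by (metis (mono_tags, lifting) eventually_mono tendsto_const tendsto_eventually)
  next
    case False
    have v': "0 \<le> v" "v < 1" using v0 False by auto
    note P = pl_props[OF v'(1)] pr_props[OF v'(2)]
    define a where "a = F (pl X v)"
    define b where "b = F (pr X v)"
    define h where "h = phi a b (pl X v) (pr X v)"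
    have ab: "a \<le> b" unfolding a_def b_def using P mF by (meson less_imp_le monoD order.trans)
    have ev: "\<forall>\<^sub>F x in at_right v. interp X V x = h x"
      unfolding eventually_at_right_field
    proof (intro exI[of _ "min (pr X v) 1"] conjI allI impI)
      show "v < min (pr X v) 1" using P v' by simp
      fix x assume x: "v < x" "x < min (pr X v) 1"
      note S = same_piece[OF v'(1), of x]
      show "interp X V x = h x" using x S P VF v' unfolding interp_def h_def a_def b_def by auto
    qed
    have hv: "interp X V v = h v" using P VF v' unfolding interp_def h_def a_def b_def by auto
    have "isCont h v" unfolding h_def
      by (rule phi_cont) (use P ab F0 F1 a_def b_def in auto)
    then have "(h \<longlongrightarrow> h v) (at_right v)" by (simp add: isCont_def filterlim_at_split)
    then have "(interp X V \<longlongrightarrow> interp X V v) (at_right v)"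
      using ev hv by (simp add: tendsto_cong)
    then show ?thesis by (simp add: continuous_within)
  qed
qed

lemma G_cdf: "is_cdf (interp X V)"
proof -
  have "\<forall>\<^sub>F x in at_bot. interp X V x = 0"
    unfolding eventually_at_bot_linorder by (intro exI[of _ "-1"]) (auto simp: interp_def)
  then have "(interp X V \<longlongrightarrow> 0) at_bot" by (simp add: tendsto_eventually)
  have "\<forall>\<^sub>F x in at_top. interp X V x = 1"
    unfolding eventually_at_top_linorder by (intro exI[of _ "1"]) (auto simp: interp_def)
  then have "(interp X V \<longlongrightarrow> 1) at_top" by (simp add: tendsto_eventually)
  then show ?thesis unfolding is_cdf_def using G_mono G_rcont \<open>(interp X V \<longlongrightarrow> 0) at_bot\<close> by blast
qed

lemma levy_le:
  assumes e: "0 \<le> e"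
    and loc: "\<And>v. 0 \<le> v \<Longrightarrow> v < 1 \<Longrightarrow> F (v - e) - e \<le> interp X V v \<and> interp X V v \<le> F (v + e) + e"
  shows "levy F (interp X V) \<le> e"
proof -
  have Fneg: "F x = 0" if "x \<le> 0" for x using mF F0[of x] Fz that by (metis antisym monoD)
  have Fbig: "F x = 1" if "1 \<le> x" for x using mF F1[of x] Fo that by (metis antisym monoD)
  have "e \<in> {e. 0 \<le> e \<and> (\<forall>v. F (v - e) - e \<le> interp X V v \<and> interp X V v \<le> F (v + e) + e)}"
  proof (safe intro!: e)
    fix v
    have "F (v - e) - e \<le> interp X V v \<and> interp X V v \<le> F (v + e) + e"
    proof (cases "v < 0")
      case True then show ?thesis using Fneg[of "v - e"] F0[of "v+e"] e unfolding interp_def by auto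
    next
      case False
      show ?thesis
      proof (cases "1 \<le> v")
        case True then show ?thesis using Fbig[of "v + e"] F1[of "v-e"] e unfolding interp_def by auto
      next
        case False then show ?thesis using loc[of v] \<open>\<not> v < 0\<close> by auto
      qed
    qed
    then show "F (v - e) - e \<le> interp X V v" "interp X V v \<le> F (v + e) + e" by auto
  qed
  then show ?thesis unfolding levy_def
    by (rule cInf_lower) (auto intro: bdd_belowI[of _ 0])
qed

end




definition bis_upd :: "(real \<times> real \<Rightarrow> bool) \<Rightarrow> real \<times> real \<Rightarrow> real \<times> (real \<times> real) \<Rightarrow> real \<times> real" where
  "bis_upd P st e = (if P (snd e) then (fst st, fst e) else (fst e, snd st))"

definition bstate :: "(real \<times> real \<Rightarrow> bool) \<Rightarrow> history \<Rightarrow> real \<times> real" where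
  "bstate P es = foldl (bis_upd P) (0, 1) es"

definition nextq :: "nat \<Rightarrow> nat \<Rightarrow> (real \<times> real \<Rightarrow> bool) list \<Rightarrow> history \<Rightarrow> real" where
  "nextq m K T h = (let n = length h in if n \<le> m then real n / real m else
     (let j = (n - Suc m) div K; i = (n - Suc m) mod K;
          st = bstate (T ! j) (take i (drop (Suc m + j * K) h)) in (fst st + snd st) / 2))"

definition nq :: "nat \<Rightarrow> nat \<Rightarrow> (real \<times> real \<Rightarrow> bool) list \<Rightarrow> nat" where
  "nq m K T = Suc m + length T * K"

definition vals :: "history \<Rightarrow> real \<Rightarrow> real" where
  "vals h x = (case map_of (map (\<lambda>e. (fst e, fst (snd e))) h) x of Some a \<Rightarrow> a | None \<Rightarrow> 0)"

definition ptsX :: "history \<Rightarrow> real set" where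
  "ptsX h = ({0, 1} \<union> fst ` set h) \<inter> {0..1}"

definition alg :: "nat \<Rightarrow> nat \<Rightarrow> (real \<times> real \<Rightarrow> bool) list \<Rightarrow> history \<Rightarrow> action" where
  "alg m K T h = (if length h < nq m K T then Query (nextq m K T h) else Output (interp (ptsX h) (vals h)))"

fun hist :: "(real \<Rightarrow> real \<times> real) \<Rightarrow> (history \<Rightarrow> real) \<Rightarrow> nat \<Rightarrow> history" where
  "hist orc nxt 0 = []"
| "hist orc nxt (Suc n) = hist orc nxt n @ [(nxt (hist orc nxt n), orc (nxt (hist orc nxt n)))]"

lemma length_hist[simp]: "length (hist orc nxt n) = n"
  by (induction n) auto

lemma take_hist: "i \<le> n \<Longrightarrow> take i (hist orc nxt n) = hist orc nxt i"
proof (induction n)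
  case 0 then show ?case by simp
next
  case (Suc n)
  show ?case
  proof (cases "i = Suc n")
    case True then show ?thesis using length_hist by (metis take_all order_refl)
  next
    case False then have "i \<le> n" using Suc by simp
    then show ?thesis using Suc by (simp add: take_append)
  qed
qed

lemma nth_hist: "i < n \<Longrightarrow> hist orc nxt n ! i = (nxt (hist orc nxt i), orc (nxt (hist orc nxt i)))"
proof (induction n)
  case 0 then show ?case by simp
next
  case (Suc n)
  show ?case
  proof (cases "i = n")
    case True then show ?thesis by (simp add: nth_append)
  next
    case False then have "i < n" using Suc by simp
    then show ?thesis using Suc by (simp add: nth_append)
  qed
qed

lemma run_hist:
  assumes q: "\<And>h. length h < Q \<Longrightarrow> A h = Query (nxt h)"
    and o: "\<And>h. length h \<ge> Q \<Longrightarrow> A h = Output (out h)"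
  shows "m \<le> Q \<Longrightarrow> Q \<le> m + n \<Longrightarrow> run A orc n (hist orc nxt m) = Some (out (hist orc nxt Q))"
proof (induction n arbitrary: m)
  case 0
  then have "m = Q" by simp
  then show ?case using o[of "hist orc nxt m"] by simp
next
  case (Suc n)
  show ?case
  proof (cases "m = Q")
    case True then show ?thesis using o[of "hist orc nxt m"] by simp
  next
    case False
    then have mQ: "m < Q" using Suc by simp
    have "run A orc (Suc n) (hist orc nxt m) = run A orc n (hist orc nxt (Suc m))"
      using q[of "hist orc nxt m"] mQ by simp
    also have "\<dots> = Some (out (hist orc nxt Q))" using Suc.IH[of "Suc m"] Suc.prems mQ by simp
    finally show ?thesis .
  qed
qed

declare hist.simps(2)[simp del]

lemma run_alg:
  assumes "nq m K T \<le> n"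
  shows "run (alg m K T) orc n [] = Some (interp (ptsX (hist orc (nextq m K T) (nq m K T))) (vals (hist orc (nextq m K T) (nq m K T))))"
proof -
  have "run (alg m K T) orc n (hist orc (nextq m K T) 0) = Some ((\<lambda>h. interp (ptsX h) (vals h)) (hist orc (nextq m K T) (nq m K T)))"
    by (rule run_hist[where Q="nq m K T"]) (use assms in \<open>auto simp: alg_def\<close>)
  then show ?thesis by simp
qed

lemma vals_eq:
  assumes "\<And>e. e \<in> set h \<Longrightarrow> fst (snd e) = F (fst e)" and "x \<in> fst ` set h"
  shows "vals h x = F x"
proof -
  obtain a where a: "map_of (map (\<lambda>e. (fst e, fst (snd e))) h) x = Some a"
  proof -
    have "x \<in> fst ` set (map (\<lambda>e. (fst e, fst (snd e))) h)" using assms(2) by force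
    then show ?thesis using that by (metis domD dom_map_of_conv_image_fst)
  qed
  then have "(x, a) \<in> set (map (\<lambda>e. (fst e, fst (snd e))) h)" by (rule map_of_SomeD)
  then obtain e where "e \<in> set h" "x = fst e" "a = fst (snd e)" by auto
  then show ?thesis using a assms(1) unfolding vals_def by auto
qed




lemma nonstraddle:
  fixes Q :: "real \<Rightarrow> bool"
  assumes pq: "0 \<le> p" "p < q" "q \<le> 1"
    and gap: "\<And>x. x \<in> X \<Longrightarrow> x \<le> p \<or> q \<le> x"
    and lohi: "lo \<in> X" "hi \<in> X" "0 \<le> lo" "hi \<le> 1" "hi - lo < q - p" "lo \<le> hi"
    and lo: "lo = 0 \<or> \<not> Q lo" and hi: "hi = 1 \<or> Q hi"
    and mono: "\<And>x y. 0 \<le> x \<Longrightarrow> x \<le> y \<Longrightarrow> y \<le> 1 \<Longrightarrow> Q x \<Longrightarrow> Q y"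
  shows "Q p \<or> \<not> Q q"
proof -
  have "lo \<le> p \<or> q \<le> lo" "hi \<le> p \<or> q \<le> hi" using gap lohi by auto
  then consider "q \<le> lo" | "hi \<le> p" | "lo \<le> p \<and> q \<le> hi" by linarith
  then show ?thesis
  proof cases
    case 1
    then have "\<not> Q lo" using lo pq by auto
    have "lo \<le> 1" using lohi by linarith
    then have "\<not> Q q" using mono[of q lo] 1 pq \<open>\<not> Q lo\<close> by auto
    then show ?thesis by simp
  next
    case 2
    then have "Q hi" using hi pq by auto
    have "0 \<le> hi" using lohi by linarith
    then have "Q p" using mono[of hi p] 2 pq \<open>Q hi\<close> by auto
    then show ?thesis by simp
  qed (use lohi in linarith)
qed

locale algrun =
  fixes F f :: "real \<Rightarrow> real" and m K :: nat and T :: "(real \<times> real \<Rightarrow> bool) list"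
  assumes m1: "1 \<le> m" and K1: "1 \<le> K"
begin

abbreviation "orc \<equiv> (\<lambda>x. (F x, f x))"
abbreviation "H \<equiv> hist orc (nextq m K T) (nq m K T)"

lemma H_entries: "e \<in> set H \<Longrightarrow> snd e = orc (fst e)"
proof -
  assume "e \<in> set H"
  then obtain i where i: "i < nq m K T" "e = H ! i" by (metis in_set_conv_nth length_hist)
  then show ?thesis using nth_hist[OF i(1)] by simp
qed

lemma grid_in: assumes "i \<le> m" shows "real i / real m \<in> fst ` set H"
proof -
  have i: "i < nq m K T" using assms unfolding nq_def by simp
  have "H ! i \<in> set H" using i by simp
  moreover have "fst (H ! i) = real i / real m"
    using nth_hist[OF i] assms unfolding nextq_def by (simp add: Let_def)
  ultimately show ?thesis by force
qed

lemma zero_one_in: "0 \<in> fst ` set H" "1 \<in> fst ` set H"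
  using grid_in[of 0] grid_in[of m] m1 by auto

lemma bis_inv:
  assumes j: "j < length T" and i: "i \<le> K"
  shows "let st = bstate (T ! j) (take i (drop (Suc m + j * K) H)) in
     0 \<le> fst st \<and> snd st \<le> 1 \<and> snd st - fst st = 1 / 2 ^ i \<and>
     (fst st = 0 \<or> (fst st \<in> fst ` set H \<and> \<not> (T ! j) (orc (fst st)))) \<and>
     (snd st = 1 \<or> (snd st \<in> fst ` set H \<and> (T ! j) (orc (snd st))))"
  using i
proof (induction i)
  case 0 then show ?case by (simp add: bstate_def)
next
  case (Suc i)
  define s where "s = Suc m + j * K"
  define st where "st = bstate (T ! j) (take i (drop s H))"
  have iK: "i < K" using Suc by simp
  have IH: "0 \<le> fst st \<and> snd st \<le> 1 \<and> snd st - fst st = 1 / 2 ^ i \<and>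
     (fst st = 0 \<or> (fst st \<in> fst ` set H \<and> \<not> (T ! j) (orc (fst st)))) \<and>
     (snd st = 1 \<or> (snd st \<in> fst ` set H \<and> (T ! j) (orc (snd st))))"
  proof -
    have "i \<le> K" using Suc by simp
    from Suc.IH[OF this] show ?thesis unfolding Let_def st_def s_def by blast
  qed
  have "(j + 1) * K \<le> length T * K" using j by (intro mult_le_mono1) simp
  then have idx: "s + i < nq m K T" unfolding s_def nq_def using iK by (simp add: algebra_simps)
  have len: "i < length (drop s H)" using idx by simp
  have tk: "take (Suc i) (drop s H) = take i (drop s H) @ [H ! (s + i)]"
    using len by (simp add: take_Suc_conv_app_nth)
  have hsi: "hist orc (nextq m K T) (s + i) = take (s + i) H" using take_hist[of "s+i" "nq m K T"] idx by simp
  have dv: "(s + i - Suc m) div K = j" "(s + i - Suc m) mod K = i"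
    unfolding s_def using iK by auto
  have tk2: "take i (drop s (take (s + i) H)) = take i (drop s H)"
    by (simp add: drop_take)
  have L: "length (take (s + i) H) = s + i" using idx by simp
  have nm: "\<not> s + i \<le> m" by (simp add: s_def)
  have nx0: "nextq m K T (take (s + i) H) =
     (fst (bstate (T ! j) (take i (drop (Suc m + j * K) (take (s + i) H)))) +
      snd (bstate (T ! j) (take i (drop (Suc m + j * K) (take (s + i) H))))) / 2"
    unfolding nextq_def Let_def L dv using nm by simp
  have nx: "nextq m K T (hist orc (nextq m K T) (s + i)) = (fst st + snd st) / 2"
    unfolding hsi nx0 s_def[symmetric] tk2 st_def ..
  have Hsi: "H ! (s + i) = ((fst st + snd st) / 2, orc ((fst st + snd st) / 2))"
    unfolding nth_hist[OF idx] nx ..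
  have mid_in: "(fst st + snd st) / 2 \<in> fst ` set H"
  proof -
    have "H ! (s + i) \<in> set H" using idx by simp
    then show ?thesis using Hsi by force
  qed
  have new: "bstate (T ! j) (take (Suc i) (drop s H)) = bis_upd (T ! j) st (H ! (s + i))"
    unfolding tk bstate_def st_def by simp
  have pw: "(1::real) / 2 ^ Suc i = (1 / 2 ^ i) / 2" by simp
  define mid where "mid = (fst st + snd st) / 2"
  have I3: "0 \<le> fst st" "snd st \<le> 1" "snd st - fst st = 1 / 2 ^ i" using IH by auto
  have w2: "mid - fst st = 1 / 2 ^ Suc i" "snd st - mid = 1 / 2 ^ Suc i"
    using I3 unfolding mid_def by (simp_all add: field_simps)
  have pos: "(0::real) < 1 / 2 ^ i" by simp
  have fs: "fst st \<le> snd st" using I3 pos by linarith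
  have mb1: "0 \<le> mid" using I3 fs unfolding mid_def by (simp add: field_simps)
  have mb2: "mid \<le> 1" using I3 fs unfolding mid_def by (simp add: field_simps)
  note mb = mb1 mb2
  show ?case
  proof (cases "(T ! j) (orc mid)")
    case True
    have "bis_upd (T ! j) st (H ! (s + i)) = (fst st, mid)"
      unfolding Hsi bis_upd_def mid_def[symmetric] using True by simp
    then show ?thesis unfolding Let_def s_def[symmetric] new
      using IH mid_in mb w2 True unfolding mid_def by simp
  next
    case False
    have "bis_upd (T ! j) st (H ! (s + i)) = (mid, snd st)"
      unfolding Hsi bis_upd_def mid_def[symmetric] using False by simp
    then show ?thesis unfolding Let_def s_def[symmetric] new
      using IH mid_in mb w2 False unfolding mid_def by simp
  qed
qed

lemma bracket:
  assumes j: "j < length T"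
  obtains lo hi where "lo \<in> ptsX H" "hi \<in> ptsX H" "0 \<le> lo" "hi \<le> 1" "hi - lo = 1 / 2 ^ K"
    "lo = 0 \<or> \<not> (T ! j) (orc lo)" "hi = 1 \<or> (T ! j) (orc hi)"
proof -
  define st where "st = bstate (T ! j) (take K (drop (Suc m + j * K) H))"
  have I: "0 \<le> fst st \<and> snd st \<le> 1 \<and> snd st - fst st = 1 / 2 ^ K \<and>
     (fst st = 0 \<or> (fst st \<in> fst ` set H \<and> \<not> (T ! j) (orc (fst st)))) \<and>
     (snd st = 1 \<or> (snd st \<in> fst ` set H \<and> (T ! j) (orc (snd st))))"
    using bis_inv[OF j order_refl] unfolding st_def Let_def by simp
  have w: "(0::real) < 1 / 2 ^ K" by simp
  have le1: "fst st \<le> 1" "0 \<le> snd st" using I w by linarith+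
  show ?thesis
  proof (rule that[of "fst st" "snd st"])
    show "fst st \<in> ptsX H" using I le1 unfolding ptsX_def by auto
    show "snd st \<in> ptsX H" using I le1 unfolding ptsX_def by auto
  qed (use I in auto)
qed

end




definition levels :: "nat \<Rightarrow> nat \<Rightarrow> real list" where
  "levels m L = concat (map (\<lambda>j. map (\<lambda>i. 2 ^ j * (1 + real i / real m)) [0..<Suc m]) [0..<Suc L])"
definition slopes :: "nat \<Rightarrow> nat \<Rightarrow> real list" where
  "slopes m L = concat (map (\<lambda>j. map (\<lambda>i. 2 ^ j * real i / real m) [0..<Suc m]) [0..<Suc L]) @
                concat (map (\<lambda>j. map (\<lambda>i. 2 ^ j * real m / real i) [1..<Suc m]) [0..<Suc L])"
definition eta :: "nat \<Rightarrow> real" where "eta L = 1 / 2 ^ Suc L"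
definition lvP :: "real \<Rightarrow> real \<times> real \<Rightarrow> bool" where "lvP y = (\<lambda>ab. 1 - 1 / y \<le> fst ab)"
definition slP :: "real \<Rightarrow> real \<Rightarrow> real \<times> real \<Rightarrow> bool" where
  "slP e s = (\<lambda>ab. 1 - e \<le> fst ab \<or> s * (1 - fst ab)^2 \<le> snd ab)"
definition tg :: "nat \<Rightarrow> nat \<Rightarrow> (real \<times> real \<Rightarrow> bool) list" where
  "tg m L = map lvP (levels m L) @ map (slP (eta L)) (slopes m L)"

lemma levels_in: "j \<le> L \<Longrightarrow> i \<le> m \<Longrightarrow> 2 ^ j * (1 + real i / real m) \<in> set (levels m L)"
  unfolding levels_def by force
lemma slopes_in1: "j \<le> L \<Longrightarrow> i \<le> m \<Longrightarrow> 2 ^ j * real i / real m \<in> set (slopes m L)"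
  unfolding slopes_def by force
lemma slopes_in2: "j \<le> L \<Longrightarrow> 1 \<le> i \<Longrightarrow> i \<le> m \<Longrightarrow> 2 ^ j * real m / real i \<in> set (slopes m L)"
  unfolding slopes_def by force

lemma length_concat_map: "length (concat (map (\<lambda>j. map (h j) xs) ys)) = length ys * length xs"
  by (induction ys) auto
lemma length_levels: "length (levels m L) = Suc L * Suc m"
  unfolding levels_def length_concat_map by simp
lemma length_slopes: "length (slopes m L) = Suc L * Suc m + Suc L * m"
  unfolding slopes_def length_append length_concat_map by simp
lemma length_tg: "length (tg m L) = Suc L * (3 * m + 2)"
  unfolding tg_def by (simp add: length_levels length_slopes algebra_simps)

lemma exp_bracket: "1 \<le> (x::real) \<Longrightarrow> x < 2 ^ Suc L \<Longrightarrow> \<exists>j\<le>L. 2 ^ j \<le> x \<and> x < 2 ^ Suc j"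
proof (induction L)
  case 0 then show ?case by auto
next
  case (Suc L)
  show ?case
  proof (cases "x < 2 ^ Suc L")
    case True then show ?thesis using Suc by (meson le_Suc_eq)
  next
    case False then show ?thesis using Suc.prems by (intro exI[of _ "Suc L"]) simp
  qed
qed

lemma frac_bracket:
  assumes "0 \<le> u" "u < 1" "1 \<le> m"
  shows "\<exists>i<m. real i / real m \<le> u \<and> u < (real i + 1) / real m"
proof -
  define i where "i = nat \<lfloor>u * real m\<rfloor>"
  have m0: "0 < real m" using assms by simp
  have fl: "real i \<le> u * real m" "u * real m < real i + 1"
    using assms m0 unfolding i_def by (auto simp: of_nat_nat)
  have "real i < real m"
  proof -
    have "u * real m < 1 * real m" using assms m0 by (intro mult_strict_right_mono) auto
    then show ?thesis using fl by simp
  qed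
  then show ?thesis using fl m0 by (intro exI[of _ i]) (auto simp: field_simps)
qed

lemma ceil_bracket: assumes "0 < (u::real)" shows "\<exists>i::nat. real i < u \<and> u \<le> real i + 1"
proof -
  define i where "i = nat (\<lceil>u\<rceil> - 1)"
  have "\<lceil>u\<rceil> \<ge> 1" using assms by simp
  then have "real i = real_of_int \<lceil>u\<rceil> - 1" unfolding i_def by (simp add: of_nat_nat)
  then show ?thesis by (intro exI[of _ i]) (auto, linarith+)
qed

lemma local_bound:
  assumes sr: "smooth_regular_01 F f" and pq: "0 \<le> p" "p < q" "q \<le> 1" and v: "p \<le> v" "v \<le> q"
    and m1: "1 \<le> m" and qp: "q - p \<le> 1 / real m" and me: "1 / (real m)^2 \<le> \<epsilon>" "0 \<le> \<epsilon>"
    and Fp: "F p < 1 - eta L"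
    and lev: "\<And>j i. j \<le> L \<Longrightarrow> i \<le> m \<Longrightarrow>
        lvP (2 ^ j * (1 + real i / real m)) (F p, f p) \<or> \<not> lvP (2 ^ j * (1 + real i / real m)) (F q, f q)"
    and slo: "\<And>s. s \<in> set (slopes m L) \<Longrightarrow> slP (eta L) s (F p, f p) \<or> \<not> slP (eta L) s (F q, f q)"
  shows "F v \<le> phi (F p) (F q) p q v \<and> phi (F p) (F q) p q v \<le> F (v + \<epsilon>) + \<epsilon>"
proof -
  have mF: "mono F" and F01: "\<And>x. 0 \<le> F x" "\<And>x. F x \<le> 1" using srF_props[OF sr] by auto
  have fnn: "\<And>x. 0 \<le> f x" using sr unfolding smooth_regular_01_def by auto
  define g where "g = (\<lambda>x. 1 / (1 - F x))"
  define s where "s = (\<lambda>x. f x / (1 - F x)^2)"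
  have m0: "0 < real m" using m1 by simp
  have etapos: "0 < eta L" unfolding eta_def by simp
  have Fp1: "F p < 1" using Fp etapos by linarith
  have gp1: "1 \<le> g p" unfolding g_def using Fp1 F01[of p] by (simp add: field_simps)
  have gpL: "g p < 2 ^ Suc L"
  proof -
    have "1 / 2 ^ Suc L < 1 - F p" using Fp unfolding eta_def by simp
    then have "(2::real) ^ Suc L * (1 / 2 ^ Suc L) < 2 ^ Suc L * (1 - F p)"
      by (rule mult_strict_left_mono) simp
    then have "1 < 2 ^ Suc L * (1 - F p)" by simp
    moreover have "0 < 1 - F p" using Fp1 by simp
    ultimately show ?thesis unfolding g_def by (simp add: divide_less_eq)
  qed
  obtain j where j: "j \<le> L" "2 ^ j \<le> g p" "g p < 2 ^ Suc j" using exp_bracket[OF gp1 gpL] by blast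
  have pj: "(0::real) < 2 ^ j" "(1::real) \<le> 2 ^ j" by simp_all
  define u where "u = g p / 2 ^ j - 1"
  have u: "0 \<le> u" "u < 1" unfolding u_def using j pj by (auto simp: field_simps)
  obtain i where i: "i < m" "real i / real m \<le> u" "u < (real i + 1) / real m"
    using frac_bracket[OF u m1] by blast
  define y where "y = 2 ^ j * (1 + real (Suc i) / real m)"
  have gpy: "g p < y" using i(3) pj unfolding y_def u_def by (simp add: field_simps)
  have gpy2: "2 ^ j * (1 + real i / real m) \<le> g p" using i(2) pj unfolding u_def by (simp add: field_simps)
  have ypos: "1 \<le> y"
  proof -
    have "(1::real) \<le> 1 + real (Suc i) / real m" using m0 by simp
    then show ?thesis unfolding y_def using mult_mono[of 1 "2 ^ j" 1 "1 + real (Suc i) / real m"] pj by simp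
  qed
  have Fgy: "\<And>x. F x < 1 \<Longrightarrow> (F x < 1 - 1 / y) = (g x < y)"
  proof -
    fix x assume Fx: "F x < 1"
    have "(F x < 1 - 1 / y) = (1 / y < 1 - F x)" by linarith
    also have "\<dots> = (1 / (1 - F x) < y)" using Fx ypos by (simp add: field_simps)
    finally show "(F x < 1 - 1 / y) = (g x < y)" unfolding g_def .
  qed
  have "\<not> lvP y (F p, f p)" using gpy Fgy[OF Fp1] unfolding lvP_def by simp
  then have "\<not> lvP y (F q, f q)" using lev[OF j(1), of "Suc i"] i(1) unfolding y_def by auto
  then have Fqy: "F q < 1 - 1 / y" unfolding lvP_def by simp
  have "0 < 1 / y" using ypos by simp
  then have Fq1: "F q < 1" using Fqy by linarith
  have gqy: "g q < y" using Fqy Fgy[OF Fq1] by simp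
  have dg: "g q - g p \<le> 2 ^ j / real m"
  proof -
    have "y - 2 ^ j * (1 + real i / real m) = 2 ^ j / real m" unfolding y_def using m0 by (simp add: field_simps)
    then show ?thesis using gqy gpy2 by linarith
  qed
  have gpq: "g p \<le> g q" unfolding g_def using mF pq Fq1 by (simp add: frac_le monoD)
  have yle: "y \<le> 2 ^ Suc L"
  proof -
    have "real (Suc i) / real m \<le> 1" using i(1) m0 by (simp add: field_simps)
    then have "y \<le> 2 ^ j * 2" unfolding y_def using pj by (intro mult_left_mono) auto
    also have "\<dots> \<le> 2 ^ Suc L" using j(1) by (simp add: power_increasing)
    finally show ?thesis by simp
  qed
  have Fqeta: "F q < 1 - eta L"
  proof -
    have "eta L \<le> 1 / y" unfolding eta_def using yle ypos by (simp add: frac_le)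
    then show ?thesis using Fqy by linarith
  qed
  have slP_iff: "\<And>x t. F x < 1 - eta L \<Longrightarrow> slP (eta L) t (F x, f x) = (t \<le> s x)"
  proof -
    fix x t assume Fx: "F x < 1 - eta L"
    have pos: "0 < (1 - F x)^2" using Fx etapos by simp
    have "slP (eta L) t (F x, f x) = (t * (1 - F x)^2 \<le> f x)" unfolding slP_def using Fx by auto
    also have "\<dots> = (t \<le> s x)" unfolding s_def using pos by (simp add: pos_le_divide_eq)
    finally show "slP (eta L) t (F x, f x) = (t \<le> s x)" .
  qed
  have sl: "\<And>t. t \<in> set (slopes m L) \<Longrightarrow> s p < t \<Longrightarrow> s q < t"
    using slo slP_iff[OF Fp] slP_iff[OF Fqeta] by force
  have sp0: "0 \<le> s p" unfolding s_def using fnn by simp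
  have spq: "s p \<le> s q" unfolding s_def using slope_mono[OF sr pq(1) less_imp_le[OF pq(2)] pq(3) Fq1] .
  have Fmono: "F v \<le> F (v + \<epsilon>)" using mF me by (simp add: monoD)
  have low: "F v \<le> phi (F p) (F q) p q v" using piece_main(1)[OF sr pq Fq1 v] .
  have "phi (F p) (F q) p q v \<le> F (v + \<epsilon>) + \<epsilon>"
  proof (cases "s p < 2 ^ j")
    case True
    define u' where "u' = s p / 2 ^ j"
    have u': "0 \<le> u'" "u' < 1" unfolding u'_def using True sp0 pj by (auto simp: field_simps)
    obtain i' where i': "i' < m" "real i' / real m \<le> u'" "u' < (real i' + 1) / real m"
      using frac_bracket[OF u' m1] by blast
    define t where "t = 2 ^ j * real (Suc i') / real m"
    have tin: "t \<in> set (slopes m L)" unfolding t_def using slopes_in1[OF j(1), of "Suc i'"] i'(1) by simp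
    have spt: "s p < t" using i'(3) pj unfolding t_def u'_def by (simp add: field_simps)
    have sqt: "s q < t" using sl[OF tin spt] .
    have tb: "t - s p \<le> 2 ^ j / real m"
    proof -
      have "2 ^ j * real i' / real m \<le> s p" using i'(2) pj unfolding u'_def by (simp add: field_simps)
      moreover have "t - 2 ^ j * real i' / real m = 2 ^ j / real m" unfolding t_def using m0 by (simp add: field_simps)
      ultimately show ?thesis by linarith
    qed
    have D: "(q - p) * (s q - s p) \<le> (1 / real m) * (2 ^ j / real m)"
      using qp pq spq sqt tb by (intro mult_mono) auto
    have "phi (F p) (F q) p q v \<le> F v + (1 / real m * (2 ^ j / real m)) / (2 ^ j)^2"
      using piece_main(2)[OF sr pq Fq1 v, of "2 ^ j" "1 / real m * (2 ^ j / real m)"] D j(2) pj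
      unfolding g_def s_def by simp
    also have "(1 / real m * (2 ^ j / real m)) / (2 ^ j)^2 = 1 / ((real m)^2 * 2 ^ j)"
      using pj by (simp add: field_simps power2_eq_square)
    also have "\<dots> \<le> 1 / (real m)^2" using pj m0 by (simp add: frac_le)
    finally show ?thesis using me Fmono by linarith
  next
    case False
    then have spj: "2 ^ j \<le> s p" by simp
    have sp: "0 < s p" using spj pj by linarith
    have sq: "0 < s q" using sp spq by linarith
    define w where "w = 2 ^ j * real m / s p"
    have w0: "0 < w" unfolding w_def using sp m0 pj by simp
    have wm0: "2 ^ j * real m \<le> s p * real m" using spj m0 by (simp add: mult_right_mono)
    have wm: "w \<le> real m" unfolding w_def using wm0 sp by (simp add: divide_le_eq mult.commute)
    obtain k :: nat where k: "real k < w" "w \<le> real k + 1" using ceil_bracket[OF w0] by blast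
    have inv: "1 / s p - 1 / s q \<le> 1 / (2 ^ j * real m)"
    proof (cases "k = 0")
      case True
      have "1 / s p = w / (2 ^ j * real m)" unfolding w_def using sp m0 pj by (simp add: field_simps)
      also have "\<dots> \<le> 1 / (2 ^ j * real m)" using k True m0 pj by (simp add: frac_le)
      moreover have "0 < 1 / s q" using sq by simp
      ultimately show ?thesis by linarith
    next
      case False
      define t where "t = 2 ^ j * real m / real k"
      have k1: "1 \<le> k" using False by simp
      have km: "k \<le> m" using k wm by linarith
      have tin: "t \<in> set (slopes m L)" unfolding t_def using slopes_in2[OF j(1) k1 km] .
      have kpos: "0 < real k" using k1 by simp
      have spt: "s p < t"
      proof -
        have "real k * s p < w * s p" using k sp by (intro mult_strict_right_mono) auto
        also have "w * s p = 2 ^ j * real m" unfolding w_def using sp by simp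
        finally show ?thesis unfolding t_def using kpos by (simp add: field_simps)
      qed
      have sqt: "s q < t" using sl[OF tin spt] .
      have "1 / t < 1 / s q" using sqt sq by (simp add: frac_less2)
      moreover have "1 / t = real k / (2 ^ j * real m)" unfolding t_def using kpos by simp
      moreover have "1 / s p = w / (2 ^ j * real m)" unfolding w_def using sp m0 pj by (simp add: field_simps)
      moreover have "w / (2 ^ j * real m) - real k / (2 ^ j * real m) \<le> 1 / (2 ^ j * real m)"
        using k m0 pj by (simp add: diff_divide_distrib[symmetric] frac_le)
      ultimately show ?thesis by linarith
    qed
    have inv0: "0 \<le> 1 / s p - 1 / s q" using sp spq by (simp add: frac_le)
    have "(g q - g p) * (1 / s p - 1 / s q) \<le> (2 ^ j / real m) * (1 / (2 ^ j * real m))"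
      using dg inv gpq inv0 by (intro mult_mono) auto
    also have "\<dots> = 1 / (real m)^2" using pj by (simp add: field_simps power2_eq_square)
    finally have cond: "(g q - g p) * (1 / s p - 1 / s q) \<le> \<epsilon>" using me by linarith
    have "phi (F p) (F q) p q v \<le> F (v + \<epsilon>)"
      using piece_main(3)[OF sr pq Fq1 v, of \<epsilon>] sp cond me unfolding g_def s_def by simp
    then show ?thesis using me by linarith
  qed
  then show ?thesis using low by simp
qed




lemma ln2_ge: "1/2 \<le> ln (2::real)"
proof -
  have "ln (1/2::real) \<le> 1/2 - 1" by (rule ln_le_minus_one) simp
  moreover have "ln (1/2::real) = - ln 2" by (simp add: ln_div)
  ultimately show ?thesis by simp
qed

lemma params:
  fixes \<epsilon> :: real
  assumes e: "0 < \<epsilon>" "\<epsilon> < 1/2"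
  defines "L \<equiv> nat \<lceil>log 2 (1/\<epsilon>)\<rceil>" and "m \<equiv> nat \<lceil>1 / sqrt \<epsilon>\<rceil>"
  shows "1 \<le> L" "1 \<le> m" "1 / 2 ^ L \<le> \<epsilon>" "1 / (real m)^2 \<le> \<epsilon>" "eta L \<le> \<epsilon>"
    "real L \<le> log 2 (1/\<epsilon>) + 1" "real m \<le> 1 / sqrt \<epsilon> + 1" "1 \<le> 1 / sqrt \<epsilon>"
proof -
  have ie: "2 < 1/\<epsilon>" using e by (simp add: field_simps)
  have lg: "1 < log 2 (1/\<epsilon>)" using ie e by (subst less_log_iff) auto
  have Lr: "real L = real_of_int \<lceil>log 2 (1/\<epsilon>)\<rceil>" unfolding L_def using lg by simp
  have Lge: "log 2 (1/\<epsilon>) \<le> real L" using Lr le_of_int_ceiling by simp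
  show "real L \<le> log 2 (1/\<epsilon>) + 1" using Lr by linarith
  have "real 1 < real L" using Lge lg by simp
  then show "1 \<le> L" by (simp only: of_nat_less_iff)
  have "1/\<epsilon> \<le> 2 powr real L" using Lge e by (simp add: log_le_iff)
  then have p2: "1/\<epsilon> \<le> 2 ^ L" by (simp add: powr_realpow)
  show "1 / 2 ^ L \<le> \<epsilon>" using p2 e by (simp add: field_simps)
  then show "eta L \<le> \<epsilon>" unfolding eta_def by (simp add: order_trans[rotated] divide_le_eq)
  have sq: "0 < sqrt \<epsilon>" "sqrt \<epsilon> < 1" using e by auto
  show r1: "1 \<le> 1 / sqrt \<epsilon>" using sq by (simp add: field_simps)
  have mr: "real m = real_of_int \<lceil>1 / sqrt \<epsilon>\<rceil>" unfolding m_def using r1 by simp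
  have mge: "1 / sqrt \<epsilon> \<le> real m" using mr le_of_int_ceiling by simp
  have "real 1 \<le> real m" using mge r1 by simp
  then show "1 \<le> m" by (simp only: of_nat_le_iff)
  show "real m \<le> 1 / sqrt \<epsilon> + 1" using mr by linarith
  have "(1 / sqrt \<epsilon>)^2 \<le> (real m)^2" using mge r1 by (intro power_mono) linarith+
  then have "1 / \<epsilon> \<le> (real m)^2" using e by (simp add: power_divide)
  moreover have "0 < 1 / \<epsilon>" using e by simp
  moreover have "0 < (real m)^2" using mge r1 by simp
  ultimately have "1 / (real m)^2 \<le> 1 / (1 / \<epsilon>)" by (intro divide_left_mono) (auto intro: mult_pos_pos)
  then show "1 / (real m)^2 \<le> \<epsilon>" by simp
qed

lemma budget:
  fixes \<epsilon> :: real
  assumes e: "0 < \<epsilon>" "\<epsilon> < 1/2"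
  defines "L \<equiv> nat \<lceil>log 2 (1/\<epsilon>)\<rceil>" and "m \<equiv> nat \<lceil>1 / sqrt \<epsilon>\<rceil>"
  shows "Suc m + Suc L * (3 * m + 2) * L \<le> nat \<lceil>300 * \<epsilon> powr (-1/2) * (ln (1/\<epsilon>))^2\<rceil>"
proof -
  note P = params[OF e, folded L_def m_def]
  define r where "r = 1 / sqrt \<epsilon>"
  define l where "l = ln (1/\<epsilon>)"
  have r1: "1 \<le> r" using P unfolding r_def by simp
  have ie: "2 < 1/\<epsilon>" using e by (simp add: field_simps)
  have lge: "ln 2 \<le> l" unfolding l_def using ie e by (subst ln_le_cancel_iff) auto
  have l2: "1/2 \<le> l" using ln2_ge lge by linarith
  have lg: "log 2 (1/\<epsilon>) = l / ln 2" unfolding l_def log_def by simp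
  have lgb: "log 2 (1/\<epsilon>) \<le> 2 * l"
  proof -
    have "l / ln 2 \<le> l / (1/2)" using ln2_ge l2 by (intro divide_left_mono) auto
    then show ?thesis using lg by simp
  qed
  have Lb: "real L \<le> 4 * l" using P(6) lgb l2 by linarith
  have L1b: "real (Suc L) \<le> 6 * l" using Lb l2 by simp
  have mb: "real m \<le> 2 * r" using P(7) r1 unfolding r_def by linarith
  have m1b: "real (Suc m) \<le> 3 * r" using mb r1 by simp
  have m3b: "real (3 * m + 2) \<le> 8 * r" using mb r1 by simp
  have "real (Suc m + Suc L * (3 * m + 2) * L) = real (Suc m) + real (Suc L) * real (3 * m + 2) * real L"
    by (simp only: of_nat_add of_nat_mult)
  also have "\<dots> \<le> 3 * r + (6 * l) * (8 * r) * (4 * l)"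
    using m1b L1b m3b Lb by (intro add_mono mult_mono) auto
  also have "\<dots> \<le> 300 * r * l^2"
  proof -
    have "3 * r \<le> 12 * r * l^2"
    proof -
      have "1/4 \<le> l^2" using l2 power_mono[of "1/2" l 2] by (simp add: power2_eq_square)
      then have "3 * r * 1 \<le> 3 * r * (4 * l^2)" using r1 by (intro mult_left_mono) auto
      then show ?thesis by (simp add: algebra_simps)
    qed
    moreover have "(6 * l) * (8 * r) * (4 * l) = 192 * r * l^2" by (simp add: power2_eq_square)
    moreover have "0 \<le> r * l^2" using r1 by simp
    ultimately show ?thesis by linarith
  qed
  also have "\<dots> = 300 * \<epsilon> powr (-1/2) * (ln (1/\<epsilon>))^2"
  proof -
    have "(-1/2::real) = - (1/2)" by simp
    then have "\<epsilon> powr (-1/2) = 1 / (\<epsilon> powr (1/2))" using powr_minus_divide[of \<epsilon> "1/2"] by simp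
    also have "\<dots> = r" unfolding r_def using e by (simp add: powr_half_sqrt)
    finally show ?thesis unfolding l_def by simp
  qed
  finally have "real (Suc m + Suc L * (3 * m + 2) * L) \<le> 300 * \<epsilon> powr (-1/2) * (ln (1/\<epsilon>))^2" .
  then have "real (Suc m + Suc L * (3 * m + 2) * L) \<le> real (nat \<lceil>300 * \<epsilon> powr (-1/2) * (ln (1/\<epsilon>))^2\<rceil>)"
    by (rule order.trans[OF _ real_nat_ceiling_ge])
  then show ?thesis by (simp only: of_nat_le_iff)
qed




lemma lvP_mono:
  assumes sr: "smooth_regular_01 F f" and "0 \<le> x" "x \<le> y" "y \<le> 1" and "lvP c (F x, f x)"
  shows "lvP c (F y, f y)"
proof -
  have "F x \<le> F y" using srF_props(1)[OF sr] assms by (simp add: monoD)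
  then show ?thesis using assms unfolding lvP_def by simp
qed

lemma slP_mono:
  assumes sr: "smooth_regular_01 F f" and e: "0 < e" and xy: "0 \<le> x" "x \<le> y" "y \<le> 1"
    and h: "slP e t (F x, f x)"
  shows "slP e t (F y, f y)"
proof -
  have Fxy: "F x \<le> F y" using srF_props(1)[OF sr] xy by (simp add: monoD)
  have fnn: "\<And>z. 0 \<le> f z" using sr unfolding smooth_regular_01_def by auto
  show ?thesis
  proof (cases "1 - e \<le> F x \<or> 1 - e \<le> F y")
    case True then show ?thesis using Fxy unfolding slP_def by auto
  next
    case False
    then have Fx: "F x < 1 - e" and Fy: "F y < 1 - e" by auto
    have hx: "t * (1 - F x)^2 \<le> f x" using h Fx unfolding slP_def by auto
    show ?thesis
    proof (cases "t \<le> 0")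
      case True
      have "t * (1 - F y)^2 \<le> 0" using True by (simp add: mult_nonpos_nonneg)
      then show ?thesis using fnn[of y] unfolding slP_def by auto
    next
      case False
      have px: "0 < (1 - F x)^2" and py: "0 < (1 - F y)^2" using Fx Fy e by auto
      have "t \<le> f x / (1 - F x)^2" using hx px by (simp add: pos_le_divide_eq)
      also have "\<dots> \<le> f y / (1 - F y)^2" using slope_mono[OF sr xy] Fy e by simp
      finally have "t * (1 - F y)^2 \<le> f y" using py by (simp add: pos_le_divide_eq)
      then show ?thesis unfolding slP_def by simp
    qed
  qed
qed

context algrun
begin

lemma main_local:
  assumes sr: "smooth_regular_01 F f" and TT: "T = tg m K"
    and e: "0 < \<epsilon>" "1 / 2 ^ K \<le> \<epsilon>" "1 / (real m)^2 \<le> \<epsilon>" "eta K \<le> \<epsilon>"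
    and v: "0 \<le> v" "v < 1"
  shows "F (v - \<epsilon>) - \<epsilon> \<le> interp (ptsX H) (vals H) v \<and> interp (ptsX H) (vals H) v \<le> F (v + \<epsilon>) + \<epsilon>"
proof -
  define X where "X = ptsX H"
  have mF: "mono F" and F01: "\<And>x. 0 \<le> F x" "\<And>x. F x \<le> 1" "F 0 = 0" "F 1 = 1"
    using srF_props[OF sr] by auto
  have VF: "\<And>x. x \<in> X \<Longrightarrow> vals H x = F x"
  proof -
    fix x assume "x \<in> X"
    then have "x \<in> fst ` set H" using zero_one_in unfolding X_def ptsX_def by auto
    then show "vals H x = F x" by (rule vals_eq[of H F, rotated]) (use H_entries in auto)
  qed
  interpret I: interp_setup X "vals H" F
  proof
    show "finite X" unfolding X_def ptsX_def by simp
    show "0 \<in> X" "1 \<in> X" unfolding X_def ptsX_def by auto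
    show "X \<subseteq> {0..1}" unfolding X_def ptsX_def by auto
  qed (use VF mF F01 in auto)
  define p where "p = pl X v"
  define q where "q = pr X v"
  note P = I.pl_props[OF v(1), folded p_def] I.pr_props[OF v(2), folded q_def]
  have pX: "p \<in> X" and qX: "q \<in> X" and pv: "p \<le> v" and vq: "v < q" using P by auto
  have p01: "0 \<le> p" "p \<le> 1" "0 \<le> q" "q \<le> 1" using pX qX I.Xsub by auto
  have Gv: "interp X (vals H) v = phi (F p) (F q) p q v"
    using v VF[OF pX] VF[OF qX] unfolding interp_def p_def[symmetric] q_def[symmetric] by simp
  have GB: "F p \<le> interp X (vals H) v" "interp X (vals H) v \<le> F q"
    using I.G_bounds[OF v] unfolding p_def q_def .
  have gap: "x \<le> p \<or> q \<le> x" if "x \<in> X" for x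
  proof (cases "x \<le> v")
    case True then show ?thesis using P(3)[OF that] by simp
  next
    case False then show ?thesis using P(6)[OF that] by simp
  qed
  have "F (v - \<epsilon>) - \<epsilon> \<le> interp X (vals H) v \<and> interp X (vals H) v \<le> F (v + \<epsilon>) + \<epsilon>"
  proof (cases "q - p \<le> \<epsilon>")
    case True
    have "v - \<epsilon> \<le> p" "q \<le> v + \<epsilon>" using True pv vq by linarith+
    then have "F (v - \<epsilon>) \<le> F p" "F q \<le> F (v + \<epsilon>)" using mF by (simp_all add: monoD)
    then show ?thesis using GB e by linarith
  next
    case qpe: False
    show ?thesis
    proof (cases "1 - \<epsilon> \<le> F p")
      case True
      have "p \<le> v + \<epsilon>" using pv e by linarith
      then have "F p \<le> F (v + \<epsilon>)" using mF by (simp add: monoD)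
      then show ?thesis using GB True F01(1)[of "v - \<epsilon>"] F01(2)[of "v - \<epsilon>"] F01(2)[of q] by linarith
    next
      case Fpe: False
      have NS: "P (F p, f p) \<or> \<not> P (F q, f q)"
        if PT: "P \<in> set T" and Pm: "\<And>x y. 0 \<le> x \<Longrightarrow> x \<le> y \<Longrightarrow> y \<le> 1 \<Longrightarrow> P (F x, f x) \<Longrightarrow> P (F y, f y)"
        for P
      proof -
        obtain j where j: "j < length T" "P = T ! j" using PT by (metis in_set_conv_nth)
        obtain lo hi where b: "lo \<in> ptsX H" "hi \<in> ptsX H" "0 \<le> lo" "hi \<le> 1" "hi - lo = 1 / 2 ^ K"
          "lo = 0 \<or> \<not> (T ! j) (orc lo)" "hi = 1 \<or> (T ! j) (orc hi)"
          using bracket[OF j(1)] by blast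
        have w: "(0::real) < 1 / 2 ^ K" by simp
        have pq: "p < q" using pv vq by linarith
        have wd: "hi - lo < q - p" using b(5) e(2) qpe by linarith
        have lh: "lo \<le> hi" using b(5) w by linarith
        have l2: "lo = 0 \<or> \<not> P (F lo, f lo)" using b(6) j(2) by simp
        have h2: "hi = 1 \<or> P (F hi, f hi)" using b(7) j(2) by simp
        show ?thesis
          by (rule nonstraddle[of p q X lo hi "\<lambda>x. P (F x, f x)", OF p01(1) pq p01(4) gap
              b(1)[folded X_def] b(2)[folded X_def] b(3) b(4) wd lh l2 h2 Pm])
      qed
      have lev: "lvP (2 ^ j * (1 + real i / real m)) (F p, f p) \<or> \<not> lvP (2 ^ j * (1 + real i / real m)) (F q, f q)"
        if "j \<le> K" "i \<le> m" for j i
      proof (rule NS)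
        show "lvP (2 ^ j * (1 + real i / real m)) \<in> set T" unfolding TT tg_def using levels_in[OF that] by auto
      qed (rule lvP_mono[OF sr], auto)
      have etap: "0 < eta K" unfolding eta_def by simp
      have slo: "slP (eta K) s (F p, f p) \<or> \<not> slP (eta K) s (F q, f q)"
        if "s \<in> set (slopes m K)" for s
      proof (rule NS)
        show "slP (eta K) s \<in> set T" unfolding TT tg_def using that by auto
      qed (rule slP_mono[OF sr etap], auto)
      have grid: "q - p \<le> 1 / real m"
      proof -
        define k where "k = nat \<lfloor>v * real m\<rfloor>"
        have m0: "0 < real m" using m1 by simp
        have kr: "real k \<le> v * real m" "v * real m < real k + 1"
          using v m0 unfolding k_def by (auto simp: of_nat_nat)
        have "v * real m < 1 * real m" using v m0 by (intro mult_strict_right_mono) auto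
        then have km: "Suc k \<le> m" using kr by simp
        have in1: "real k / real m \<in> X" using grid_in[of k] km m0 unfolding X_def ptsX_def by (auto simp: field_simps)
        have in2: "real (Suc k) / real m \<in> X" using grid_in[of "Suc k"] km m0 unfolding X_def ptsX_def by (auto simp: field_simps)
        have "real k / real m \<le> v" using kr m0 by (simp add: field_simps)
        then have "real k / real m \<le> p" using P in1 by auto
        moreover have "v < real (Suc k) / real m" using kr m0 by (simp add: field_simps)
        then have "q \<le> real (Suc k) / real m" using P in2 by auto
        ultimately have "q - p \<le> real (Suc k) / real m - real k / real m" by linarith
        also have "\<dots> = 1 / real m" by (simp add: diff_divide_distrib[symmetric])
        finally show ?thesis .
      qed
      have Fp: "F p < 1 - eta K" using Fpe e by linarith
      have LB: "F v \<le> phi (F p) (F q) p q v \<and> phi (F p) (F q) p q v \<le> F (v + \<epsilon>) + \<epsilon>"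
        by (rule local_bound[OF sr p01(1) _ p01(4) _ _ m1 grid e(3) _ Fp lev slo]) (use P e in auto)
      have "F (v - \<epsilon>) \<le> F v" using mF e by (simp add: monoD)
      then show ?thesis using LB Gv e by linarith
    qed
  qed
  then show ?thesis unfolding X_def .
qed

end




context algrun
begin

lemma setupH:
  assumes sr: "smooth_regular_01 F f"
  shows "interp_setup (ptsX H) (vals H) F"
proof -
  have mF: "mono F" and F01: "\<And>x. 0 \<le> F x" "\<And>x. F x \<le> 1" "F 0 = 0" "F 1 = 1"
    using srF_props[OF sr] by auto
  have VF: "\<And>x. x \<in> ptsX H \<Longrightarrow> vals H x = F x"
  proof -
    fix x assume "x \<in> ptsX H"
    then have "x \<in> fst ` set H" using zero_one_in unfolding ptsX_def by auto
    then show "vals H x = F x" by (rule vals_eq[of H F, rotated]) (use H_entries in auto)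
  qed
  show ?thesis
  proof
    show "finite (ptsX H)" unfolding ptsX_def by simp
    show "0 \<in> ptsX H" "1 \<in> ptsX H" unfolding ptsX_def by auto
    show "ptsX H \<subseteq> {0..1}" unfolding ptsX_def by auto
  qed (use VF mF F01 in auto)
qed

end

theorem theorem7:
  shows "\<exists>(C::real) (c::real) (k::nat). \<forall>\<epsilon>::real. 0 < \<epsilon> \<and> \<epsilon> < 1/2 \<longrightarrow>
    (\<exists>A :: history \<Rightarrow> action. \<forall>F f. smooth_regular_01 F f \<longrightarrow>
       (\<exists>G. run A (\<lambda>x. (F x, f x)) (nat \<lceil>C * \<epsilon> powr (-1/2) * (ln (1/\<epsilon>)) ^ k\<rceil>) [] = Some G
            \<and> is_cdf G \<and> levy F G \<le> c * \<epsilon>))"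
proof (rule exI[of _ "300::real"], rule exI[of _ "1::real"], rule exI[of _ "2::nat"], intro allI impI)
  fix \<epsilon> :: real assume "0 < \<epsilon> \<and> \<epsilon> < 1/2"
  then have e: "0 < \<epsilon>" "\<epsilon> < 1/2" by auto
  define L where "L = nat \<lceil>log 2 (1/\<epsilon>)\<rceil>"
  define m where "m = nat \<lceil>1 / sqrt \<epsilon>\<rceil>"
  note P = params[OF e, folded L_def m_def]
  note B = budget[OF e, folded L_def m_def]
  define T where "T = tg m L"
  define n where "n = nat \<lceil>300 * \<epsilon> powr (-1/2) * (ln (1/\<epsilon>)) ^ 2\<rceil>"
  have nqn: "nq m L T \<le> n" unfolding nq_def T_def n_def length_tg using B by (simp add: mult.assoc)
  show "\<exists>A. \<forall>F f. smooth_regular_01 F f \<longrightarrow>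
       (\<exists>G. run A (\<lambda>x. (F x, f x)) (nat \<lceil>300 * \<epsilon> powr (-1/2) * (ln (1/\<epsilon>)) ^ 2\<rceil>) [] = Some G
            \<and> is_cdf G \<and> levy F G \<le> 1 * \<epsilon>)"
  proof -
  have "\<forall>F f. smooth_regular_01 F f \<longrightarrow>
       (\<exists>G. run (alg m L T) (\<lambda>x. (F x, f x)) n [] = Some G \<and> is_cdf G \<and> levy F G \<le> 1 * \<epsilon>)"
  proof (intro allI impI)
    fix F f :: "real \<Rightarrow> real" assume sr: "smooth_regular_01 F f"
    interpret R: algrun F f m L T using P(1,2) by unfold_locales
    interpret I: interp_setup "ptsX R.H" "vals R.H" F using R.setupH[OF sr] .
    have run: "run (alg m L T) (\<lambda>x. (F x, f x)) n [] = Some (interp (ptsX R.H) (vals R.H))"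
      by (rule run_alg[OF nqn])
    have lv: "levy F (interp (ptsX R.H) (vals R.H)) \<le> \<epsilon>"
    proof (rule I.levy_le)
      show "0 \<le> \<epsilon>" using e by simp
      fix v :: real assume "0 \<le> v" "v < 1"
      then show "F (v - \<epsilon>) - \<epsilon> \<le> interp (ptsX R.H) (vals R.H) v \<and> interp (ptsX R.H) (vals R.H) v \<le> F (v + \<epsilon>) + \<epsilon>"
        by (rule R.main_local[OF sr T_def e(1) P(3) P(4) P(5)])
    qed
    show "\<exists>G. run (alg m L T) (\<lambda>x. (F x, f x)) n [] = Some G \<and> is_cdf G \<and> levy F G \<le> 1 * \<epsilon>"
      using run I.G_cdf lv by auto
  qed
  then show ?thesis unfolding n_def by blast
  qed
qed


end
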